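(* Let $P$ be a finite poset, $\epsilon\in\{1,-1\}$ and $y_0,x_1,\ldots,y_{t-1},x_t$ a $q^{(\epsilon)}$-reduced sequence of elements of $P$ satisfying condition N'. Put $x_0=-\infty$, $y_t=\infty$. Then there exists $\xi\in S^{(\epsilon)}$ such that $T^\xi$ is a generator of $\omega^{(\epsilon)}$ and $\deg T^\xi=q^{(\epsilon)}(x_0,y_0,\ldots,x_t,y_t)$.
   Context: $P^\pm=P\cup\{-\infty,\infty\}$, $-\infty<z<\infty$ for $z\in P$; $P^-=P\cup\{-\infty\}$; $\xi^+(B)=\sum_{b\in B}\xi(b)$. Saturated chain: $x=z_0\lessdot\cdots\lessdot z_t=y$, length $t$. $q^{(\epsilon)}\mathrm{dist}(x,y)=\max\{\epsilon t:$ saturated chain of length $t$ from $x$ to $y$ in $P^\pm\}$. For $w_0<z_0>w_1<\cdots>w_s<z_s$ in $P^\pm$, $q^{(\epsilon)}(w_0,z_0,\ldots,w_s,z_s)=\sum_{\ell=0}^s q^{(\epsilon)}\mathrm{dist}(w_\ell,z_\ell)-\sum_{\ell=0}^{s-1}q^{(\epsilon)}\mathrm{dist}(w_{\ell+1},z_\ell)$. Condition N': $y_0>x_1<y_1>\cdots<y_{t-1}>x_t$ in $P$ and $y_i\not>x_j$ whenever $i\le j-2$ (empty sequence allowed). $q^{(\epsilon)}$-reduced: with $x_0=-\infty,y_t=\infty$, $q^{(\epsilon)}\mathrm{dist}(x_i,y_j)<q^{(\epsilon)}(x_i,y_i,\ldots,x_j,y_j)$ whenever $0\le i<j\le t$ and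 $x_i<y_j$. $S^{(m)}=\{\xi\in\mathbb Z^{P^-}:\xi(x)\ge m\ \forall x\in P,\ \xi(-\infty)\ge\xi^+(C)+m$ for all maximal chains $C\}$. $R=\mathbb K[\mathcal C(P)]=\bigoplus_{S^{(0)}}\mathbb KT^\xi$ (Ehrhart ring of the chain polytope; $T^\xi=\prod T_x^{\xi(x)}$, $\deg T^\xi=\xi(-\infty)$), $\omega^{(1)}=\omega=\bigoplus_{S^{(1)}}\mathbb KT^\xi$, $\omega^{(-1)}=R:\omega=\bigoplus_{S^{(-1)}}\mathbb KT^\xi$. A generator of $\omega^{(\epsilon)}$ is a monomial $T^\xi$, $\xi\in S^{(\epsilon)}$, not of the form $T^{\xi_1}T^{\xi_2}$ with $\xi_1\in S^{(0)}$, $\xi_1(-\infty)>0$, $\xi_2\in S^{(\epsilon)}$. *)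

theory Defs
  imports Main
begin

datatype 'a ext = NegInf | Fin 'a | PosInf

fun eless :: "'a::order ext \<Rightarrow> 'a ext \<Rightarrow> bool" where
  "eless NegInf NegInf = False"
| "eless NegInf _ = True"
| "eless (Fin a) (Fin b) = (a < b)"
| "eless (Fin a) PosInf = True"
| "eless (Fin a) NegInf = False"
| "eless PosInf _ = False"

definition Pext :: "'a set \<Rightarrow> 'a ext set" where
  "Pext P = {NegInf, PosInf} \<union> Fin ` P"

definition Pminus :: "'a set \<Rightarrow> 'a ext set" where
  "Pminus P = {NegInf} \<union> Fin ` P"

definition covers :: "'a::order set \<Rightarrow> 'a ext \<Rightarrow> 'a ext \<Rightarrow> bool" where
  "covers P a b \<longleftrightarrow> a \<in> Pext P \<and> b \<in> Pext P \<and> eless a b \<and>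
     \<not> (\<exists>c\<in>Pext P. eless a c \<and> eless c b)"

definition satchain :: "'a::order set \<Rightarrow> 'a ext \<Rightarrow> 'a ext \<Rightarrow> nat \<Rightarrow> bool" where
  "satchain P a b t \<longleftrightarrow> (\<exists>zs. length zs = Suc t \<and> zs ! 0 = a \<and> zs ! t = b \<and>
     (\<forall>i<t. covers P (zs ! i) (zs ! Suc i)))"

definition qdist :: "'a::order set \<Rightarrow> int \<Rightarrow> 'a ext \<Rightarrow> 'a ext \<Rightarrow> int" where
  "qdist P eps a b = Max {eps * int t | t. satchain P a b t}"

definition qseq :: "'a::order set \<Rightarrow> int \<Rightarrow> (nat \<Rightarrow> 'a ext) \<Rightarrow> (nat \<Rightarrow> 'a ext) \<Rightarrow> nat \<Rightarrow> nat \<Rightarrow> int" where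
  "qseq P eps w z i j = (\<Sum>l=i..j. qdist P eps (w l) (z l)) - (\<Sum>l=i..<j. qdist P eps (w (Suc l)) (z l))"

definition Xs :: "(nat \<Rightarrow> 'a) \<Rightarrow> nat \<Rightarrow> 'a ext" where
  "Xs x i = (if i = 0 then NegInf else Fin (x i))"

definition Ys :: "nat \<Rightarrow> (nat \<Rightarrow> 'a) \<Rightarrow> nat \<Rightarrow> 'a ext" where
  "Ys t y j = (if j = t then PosInf else Fin (y j))"

definition condN' :: "'a::order set \<Rightarrow> nat \<Rightarrow> (nat \<Rightarrow> 'a) \<Rightarrow> (nat \<Rightarrow> 'a) \<Rightarrow> bool" where
  "condN' P t x y \<longleftrightarrow>
     (\<forall>i\<in>{1..t}. x i \<in> P) \<and> (\<forall>i<t. y i \<in> P) \<and>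
     (\<forall>i<t. x (Suc i) < y i) \<and>
     (\<forall>i. 1 \<le> i \<and> i < t \<longrightarrow> x i < y i) \<and>
     (\<forall>i j. i + 2 \<le> j \<and> j \<le> t \<longrightarrow> \<not> (x j < y i))"

definition q_reduced :: "'a::order set \<Rightarrow> int \<Rightarrow> nat \<Rightarrow> (nat \<Rightarrow> 'a) \<Rightarrow> (nat \<Rightarrow> 'a) \<Rightarrow> bool" where
  "q_reduced P eps t x y \<longleftrightarrow>
     (\<forall>i j. i < j \<and> j \<le> t \<and> eless (Xs x i) (Ys t y j) \<longrightarrow>
        qdist P eps (Xs x i) (Ys t y j) < qseq P eps (Xs x) (Ys t y) i j)"

definition is_chain :: "'a::order set \<Rightarrow> 'a set \<Rightarrow> bool" where
  "is_chain P C \<longleftrightarrow> C \<subseteq> P \<and> (\<forall>a\<in>C. \<forall>b\<in>C. a \<le> b \<or> b \<le> a)"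

definition maximal_chain :: "'a::order set \<Rightarrow> 'a set \<Rightarrow> bool" where
  "maximal_chain P C \<longleftrightarrow> is_chain P C \<and> (\<forall>D. is_chain P D \<and> C \<subseteq> D \<longrightarrow> D = C)"

text \<open>S^(m): exponent vectors xi in Z^(P^-), encoded as functions vanishing outside P^-.\<close>
definition S :: "'a::order set \<Rightarrow> int \<Rightarrow> ('a ext \<Rightarrow> int) set" where
  "S P m = {\<xi>. (\<forall>a. a \<notin> Pminus P \<longrightarrow> \<xi> a = 0) \<and>
              (\<forall>x\<in>P. \<xi> (Fin x) \<ge> m) \<and>
              (\<forall>C. maximal_chain P C \<longrightarrow> \<xi> NegInf \<ge> (\<Sum>x\<in>C. \<xi> (Fin x)) + m)}"

text \<open>T^xi is a generator of omega^(eps); T^xi1 T^xi2 = T^(xi1+xi2), deg T^xi = xi(-infinity).\<close>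
definition is_generator :: "'a::order set \<Rightarrow> int \<Rightarrow> ('a ext \<Rightarrow> int) \<Rightarrow> bool" where
  "is_generator P eps \<xi> \<longleftrightarrow> \<xi> \<in> S P eps \<and>
     \<not> (\<exists>\<xi>1 \<xi>2. \<xi>1 \<in> S P 0 \<and> \<xi>1 NegInf > 0 \<and> \<xi>2 \<in> S P eps \<and> \<xi> = (\<lambda>a. \<xi>1 a + \<xi>2 a))"

end

theory Submission
  imports Defs
begin

abbreviation ele :: "'a::order ext \<Rightarrow> 'a ext \<Rightarrow> bool" where "ele a b \<equiv> a = b \<or> eless a b"

lemma eless_trans: "eless a b \<Longrightarrow> eless b c \<Longrightarrow> eless a c"
  by (cases a; cases b; cases c) auto
lemma eless_irrefl[simp]: "\<not> eless a a" by (cases a) auto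
lemma eless_asym: "eless a b \<Longrightarrow> \<not> eless b a" using eless_trans eless_irrefl by blast
lemma eless_PosInf[simp]: "\<not> eless PosInf a" by (cases a) auto
lemma eless_NegInf2[simp]: "\<not> eless a NegInf" by (cases a) auto
lemma eless_NegInf: "a \<noteq> NegInf \<Longrightarrow> eless NegInf a" by (cases a) auto
lemma eless_toPosInf: "a \<noteq> PosInf \<Longrightarrow> eless a PosInf" by (cases a) auto
lemma eless_Fin_Pos[simp]: "eless (Fin v) PosInf" by simp
lemma eless_Neg_Fin[simp]: "eless NegInf (Fin v)" by simp

lemma finite_Pext: "finite P \<Longrightarrow> finite (Pext P)" by (simp add: Pext_def)
lemma Pext_simps[simp]: "NegInf \<in> Pext P" "PosInf \<in> Pext P" "Fin v \<in> Pext P \<longleftrightarrow> v \<in> P"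
  by (auto simp: Pext_def)

lemma covers_less: "covers P a b \<Longrightarrow> eless a b" by (simp add: covers_def)
lemma covers_in: "covers P a b \<Longrightarrow> a \<in> Pext P" "covers P a b \<Longrightarrow> b \<in> Pext P"
  by (simp_all add: covers_def)

definition schain :: "'a::order set \<Rightarrow> 'a ext list \<Rightarrow> bool" where
  "schain P zs \<longleftrightarrow> zs \<noteq> [] \<and> set zs \<subseteq> Pext P \<and> successively (covers P) zs"

lemma transp_eless: "transp eless" by (auto simp: transp_def intro: eless_trans)

lemma schain_sorted: "schain P zs \<Longrightarrow> sorted_wrt eless zs"
proof -
  assume "schain P zs"
  then have "successively eless zs" unfolding schain_def
    by (auto intro: successively_mono covers_less)
  then show ?thesis using successively_conv_sorted_wrt[OF transp_eless] by blast
qed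

lemma sorted_eless_distinct: "sorted_wrt eless zs \<Longrightarrow> distinct zs"
  by (induction zs) auto

lemma satchain_iff:
  assumes "a \<in> Pext P"
  shows "satchain P a b k \<longleftrightarrow> (\<exists>zs. schain P zs \<and> length zs = Suc k \<and> hd zs = a \<and> last zs = b)"
proof
  assume "satchain P a b k"
  then obtain zs where z: "length zs = Suc k" "zs ! 0 = a" "zs ! k = b"
     "\<forall>i<k. covers P (zs ! i) (zs ! Suc i)" unfolding satchain_def by blast
  have "set zs \<subseteq> Pext P"
  proof
    fix c assume "c \<in> set zs"
    then obtain i where i: "i < length zs" "zs ! i = c" by (auto simp: in_set_conv_nth)
    show "c \<in> Pext P"
    proof (cases i)
      case 0 then show ?thesis using i z assms by simp
    next
      case (Suc j) then show ?thesis using i z covers_in(2)[of P "zs!j" "zs ! Suc j"] by auto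
    qed
  qed
  moreover have "successively (covers P) zs" using z by (auto simp: successively_conv_nth)
  moreover have "hd zs = a" using z by (cases zs) auto
  moreover have "last zs = b" using z by (subst last_conv_nth) auto
  ultimately show "\<exists>zs. schain P zs \<and> length zs = Suc k \<and> hd zs = a \<and> last zs = b"
    using z by (intro exI[of _ zs]) (auto simp: schain_def)
next
  assume "\<exists>zs. schain P zs \<and> length zs = Suc k \<and> hd zs = a \<and> last zs = b"
  then obtain zs where z: "schain P zs" "length zs = Suc k" "hd zs = a" "last zs = b" by blast
  then show "satchain P a b k" unfolding satchain_def schain_def
    by (intro exI[of _ zs]) (auto simp: successively_conv_nth hd_conv_nth last_conv_nth)
qed

lemma sorted_hd_last: "sorted_wrt eless zs \<Longrightarrow> length zs \<ge> 2 \<Longrightarrow> eless (hd zs) (last zs)"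
  by (cases zs) (auto simp: last_in_set)

lemma schain_single: "schain P zs \<Longrightarrow> hd zs = last zs \<Longrightarrow> zs = [hd zs]"
proof -
  assume a: "schain P zs" "hd zs = last zs"
  have "length zs \<noteq> 0" using a by (simp add: schain_def)
  moreover have "\<not> length zs \<ge> 2" using sorted_hd_last[OF schain_sorted[OF a(1)]] a(2) by auto
  ultimately have "length zs = 1" by linarith
  then show ?thesis by (cases zs) auto
qed

lemma schain_length: "finite P \<Longrightarrow> schain P zs \<Longrightarrow> length zs \<le> card (Pext P)"
proof -
  assume a: "finite P" "schain P zs"
  have "distinct zs" using sorted_eless_distinct schain_sorted a(2) by blast
  then have "length zs = card (set zs)" by (simp add: distinct_card)
  also have "\<dots> \<le> card (Pext P)" using a by (intro card_mono) (auto simp: finite_Pext schain_def)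
  finally show ?thesis .
qed

lemma schain_Cons: "schain P (a # zs) \<longleftrightarrow> a \<in> Pext P \<and> (zs = [] \<or> (covers P a (hd zs) \<and> schain P zs))"
  by (cases zs) (auto simp: schain_def)

lemma schain_snoc: "schain P (zs @ [a]) \<longleftrightarrow> a \<in> Pext P \<and> (zs = [] \<or> (covers P (last zs) a \<and> schain P zs))"
  by (cases zs rule: rev_cases) (auto simp: schain_def successively_append_iff)

lemma schain_append: "schain P xs \<Longrightarrow> schain P ys \<Longrightarrow> covers P (last xs) (hd ys) \<Longrightarrow> schain P (xs @ ys)"
  by (auto simp: schain_def successively_append_iff)

lemma schain_join: "schain P xs \<Longrightarrow> schain P ys \<Longrightarrow> last xs = hd ys \<Longrightarrow> schain P (xs @ tl ys)"
proof -
  assume a: "schain P xs" "schain P ys" "last xs = hd ys"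
  show ?thesis
  proof (cases "tl ys = []")
    case True then show ?thesis using a by simp
  next
    case False
    then obtain c cs where ys: "ys = c # cs" "cs \<noteq> []" using a(2) by (cases ys) (auto simp: schain_def)
    then have "covers P c (hd cs)" "schain P cs" using a(2) by (auto simp: schain_Cons)
    then show ?thesis using a ys by (auto intro: schain_append)
  qed
qed

lemma finite_min_eless: "finite Z \<Longrightarrow> Z \<noteq> {} \<Longrightarrow> \<exists>m\<in>Z. \<forall>s\<in>Z. \<not> eless s m"
proof (induction Z rule: finite_induct)
  case empty then show ?case by simp
next
  case (insert a Z)
  show ?case
  proof (cases "Z = {}")
    case True then show ?thesis by auto
  next
    case False
    then obtain m where m: "m \<in> Z" "\<forall>s\<in>Z. \<not> eless s m" using insert by blast
    show ?thesis
    proof (cases "eless a m")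
      case True
      then show ?thesis using m by (auto intro: eless_trans)
    next
      case False then show ?thesis using m by auto
    qed
  qed
qed

lemma finite_max_eless: "finite Z \<Longrightarrow> Z \<noteq> {} \<Longrightarrow> \<exists>m\<in>Z. \<forall>s\<in>Z. \<not> eless m s"
proof (induction Z rule: finite_induct)
  case empty then show ?case by simp
next
  case (insert a Z)
  show ?case
  proof (cases "Z = {}")
    case True then show ?thesis by auto
  next
    case False
    then obtain m where m: "m \<in> Z" "\<forall>s\<in>Z. \<not> eless m s" using insert by blast
    show ?thesis
    proof (cases "eless m a")
      case True
      then show ?thesis using m by (auto intro: eless_trans)
    next
      case False then show ?thesis using m by auto
    qed
  qed
qed

lemma cover_up:
  assumes "finite P" "a \<in> Pext P" "b \<in> Pext P" "eless a b"
  shows "\<exists>w. covers P a w \<and> ele w b"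
proof -
  let ?Z = "{w\<in>Pext P. eless a w \<and> ele w b}"
  have "finite ?Z" using finite_Pext[OF assms(1)] by simp
  moreover have "b \<in> ?Z" using assms by simp
  ultimately obtain m where m: "m \<in> ?Z" "\<forall>s\<in>?Z. \<not> eless s m"
    using finite_min_eless[of ?Z] by blast
  have nc: "\<not> (\<exists>c\<in>Pext P. eless a c \<and> eless c m)"
  proof
    assume "\<exists>c\<in>Pext P. eless a c \<and> eless c m"
    then obtain c where c: "c \<in> Pext P" "eless a c" "eless c m" by blast
    have "ele c b" using c(3) m(1) eless_trans by blast
    then have "c \<in> ?Z" using c by blast
    then show False using m(2) c(3) by blast
  qed
  have "covers P a m" unfolding covers_def using nc assms(2) m(1) by blast
  then show ?thesis using m(1) by blast
qed

lemma cover_down: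
  assumes "finite P" "a \<in> Pext P" "b \<in> Pext P" "eless a b"
  shows "\<exists>u. covers P u b \<and> ele a u"
proof -
  let ?Z = "{u\<in>Pext P. eless u b \<and> ele a u}"
  have "finite ?Z" using finite_Pext[OF assms(1)] by simp
  moreover have "a \<in> ?Z" using assms by simp
  ultimately obtain m where m: "m \<in> ?Z" "\<forall>s\<in>?Z. \<not> eless m s"
    using finite_max_eless[of ?Z] by blast
  have nc: "\<not> (\<exists>c\<in>Pext P. eless m c \<and> eless c b)"
  proof
    assume "\<exists>c\<in>Pext P. eless m c \<and> eless c b"
    then obtain c where c: "c \<in> Pext P" "eless m c" "eless c b" by blast
    have "ele a c" using c(2) m(1) eless_trans by blast
    then have "c \<in> ?Z" using c by blast
    then show False using m(2) c(2) by blast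
  qed
  have "covers P m b" unfolding covers_def using nc assms(3) m(1) by blast
  then show ?thesis using m(1) by blast
qed

lemma chain_exists:
  assumes "finite P" "a \<in> Pext P" "b \<in> Pext P" "ele a b"
  shows "\<exists>zs. schain P zs \<and> hd zs = a \<and> last zs = b"
proof -
  have "\<And>a. a \<in> Pext P \<Longrightarrow> ele a b \<Longrightarrow> card {w\<in>Pext P. eless a w \<and> ele w b} = n \<Longrightarrow>
      \<exists>zs. schain P zs \<and> hd zs = a \<and> last zs = b" for n
  proof (induction n rule: less_induct)
    case (less n a)
    show ?case
    proof (cases "a = b")
      case True then show ?thesis using less(2) by (intro exI[of _ "[a]"]) (simp add: schain_def)
    next
      case False
      then have ab: "eless a b" using less(3) by blast
      obtain w where w: "covers P a w" "ele w b" using cover_up[OF assms(1) less(2) assms(3) ab] by blast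
      have wP: "w \<in> Pext P" using w covers_in by blast
      have aw: "eless a w" using covers_less[OF w(1)] .
      have sub: "{u\<in>Pext P. eless w u \<and> ele u b} \<subset> {u\<in>Pext P. eless a u \<and> ele u b}"
      proof
        show "{u\<in>Pext P. eless w u \<and> ele u b} \<subseteq> {u\<in>Pext P. eless a u \<and> ele u b}"
          using aw eless_trans by blast
        have "w \<in> {u\<in>Pext P. eless a u \<and> ele u b}" using wP aw w(2) by blast
        moreover have "w \<notin> {u\<in>Pext P. eless w u \<and> ele u b}" by simp
        ultimately show "{u\<in>Pext P. eless w u \<and> ele u b} \<noteq> {u\<in>Pext P. eless a u \<and> ele u b}" by blast
      qed
      have fin: "finite {u\<in>Pext P. eless a u \<and> ele u b}" using finite_Pext[OF assms(1)] by simp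
      have "card {u\<in>Pext P. eless w u \<and> ele u b} < n"
        using psubset_card_mono[OF fin sub] less(4) by simp
      then obtain zs where zs: "schain P zs" "hd zs = w" "last zs = b" using less(1) wP w(2) by blast
      have zne: "zs \<noteq> []" using zs(1) by (simp add: schain_def)
      have "schain P (a # zs)" using w(1) less(2) zs by (simp add: schain_Cons)
      then show ?thesis using zs zne by (intro exI[of _ "a # zs"]) simp
    qed
  qed
  then show ?thesis using assms by blast
qed

lemma qd_props:
  assumes "finite P" "a \<in> Pext P" "b \<in> Pext P" "ele a b"
  shows "\<exists>k. satchain P a b k \<and> qdist P eps a b = eps * int k"
    and "satchain P a b k \<Longrightarrow> eps * int k \<le> qdist P eps a b"
proof -
  have fin: "finite {k. satchain P a b k}"
  proof (rule finite_subset)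
    show "{k. satchain P a b k} \<subseteq> {..card (Pext P)}"
    proof
      fix k assume "k \<in> {k. satchain P a b k}"
      then obtain zs where "schain P zs" "length zs = Suc k" using satchain_iff[OF assms(2)] by blast
      then show "k \<in> {..card (Pext P)}" using schain_length[OF assms(1)] by fastforce
    qed
  qed simp
  obtain zs where zs: "schain P zs" "hd zs = a" "last zs = b" using chain_exists assms by blast
  then have "length zs = Suc (length zs - 1)" by (simp add: schain_def)
  then have ne: "satchain P a b (length zs - 1)" using satchain_iff[OF assms(2)] zs by blast
  have eq: "{eps * int t | t. satchain P a b t} = (\<lambda>t. eps * int t) ` {k. satchain P a b k}" by auto
  have F: "finite {eps * int t | t. satchain P a b t}" unfolding eq using fin by simp
  have N: "{eps * int t | t. satchain P a b t} \<noteq> {}" using ne by blast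
  have "qdist P eps a b \<in> {eps * int t | t. satchain P a b t}"
    unfolding qdist_def using Max_in[OF F N] .
  then show "\<exists>k. satchain P a b k \<and> qdist P eps a b = eps * int k" by blast
  show "satchain P a b k \<Longrightarrow> eps * int k \<le> qdist P eps a b"
    unfolding qdist_def using Max_ge[OF F] by blast
qed

lemma qd_ge:
  assumes "finite P" "schain P zs" "hd zs = a" "last zs = b"
  shows "eps * int (length zs - 1) \<le> qdist P eps a b"
proof -
  have ne: "zs \<noteq> []" using assms(2) by (simp add: schain_def)
  have aP: "a \<in> Pext P" using assms ne by (auto simp: schain_def)
  have bP: "b \<in> Pext P" using assms ne by (auto simp: schain_def)
  have ab: "ele a b"
  proof (cases "length zs \<ge> 2")
    case True then show ?thesis using sorted_hd_last[OF schain_sorted[OF assms(2)]] assms by simp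
  next
    case False
    have "length zs \<noteq> 0" using ne by simp
    then have "length zs = 1" using False by linarith
    then show ?thesis using assms by (cases zs) auto
  qed
  have "length zs = Suc (length zs - 1)" using ne by simp
  then have "satchain P a b (length zs - 1)" using satchain_iff[OF aP] assms by blast
  then show ?thesis using qd_props(2)[OF assms(1) aP bP ab] by blast
qed

lemma qd_opt:
  assumes "finite P" "a \<in> Pext P" "b \<in> Pext P" "ele a b"
  shows "\<exists>zs. schain P zs \<and> hd zs = a \<and> last zs = b \<and> qdist P eps a b = eps * int (length zs - 1)"
proof -
  obtain k where k: "satchain P a b k" "qdist P eps a b = eps * int k" using qd_props(1)[OF assms] by blast
  then obtain zs where "schain P zs" "length zs = Suc k" "hd zs = a" "last zs = b"
    using satchain_iff[OF assms(2)] by blast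
  then show ?thesis using k by (intro exI[of _ zs]) simp
qed

lemma qd_refl:
  assumes "finite P" "a \<in> Pext P"
  shows "qdist P eps a a = 0"
proof -
  obtain zs where zs: "schain P zs" "hd zs = a" "last zs = a" "qdist P eps a a = eps * int (length zs - 1)"
    using qd_opt[OF assms assms(2)] by blast
  then have "zs = [a]" using schain_single by fastforce
  then show ?thesis using zs by simp
qed

lemma qd_cover:
  assumes "finite P" "covers P a b"
  shows "qdist P eps a b = eps"
proof -
  have aP: "a \<in> Pext P" and bP: "b \<in> Pext P" and ab: "eless a b"
    using assms(2) covers_in covers_less by blast+
  obtain zs where zs: "schain P zs" "hd zs = a" "last zs = b" "qdist P eps a b = eps * int (length zs - 1)"
    using qd_opt[OF assms(1) aP bP] ab by blast
  have ne: "zs \<noteq> []" using zs by (simp add: schain_def)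
  have srt: "sorted_wrt eless zs" using schain_sorted zs(1) by blast
  have l2: "length zs \<ge> 2"
  proof (rule ccontr)
    assume "\<not> length zs \<ge> 2"
    moreover have "length zs \<noteq> 0" using ne by simp
    ultimately have "length zs = 1" by linarith
    then have "a = b" using zs by (cases zs) auto
    then show False using ab by simp
  qed
  have "\<not> length zs \<ge> 3"
  proof
    assume l3: "length zs \<ge> 3"
    have "eless (zs ! 0) (zs ! 1)" using srt l3 by (simp add: sorted_wrt_iff_nth_less)
    moreover have "eless (zs ! 1) (zs ! (length zs - 1))" using srt l3 by (simp add: sorted_wrt_iff_nth_less)
    moreover have "zs ! 1 \<in> Pext P" using zs(1) l3 by (auto simp: schain_def)
    moreover have "zs ! 0 = a" using zs ne by (simp add: hd_conv_nth)
    moreover have "zs ! (length zs - 1) = b" using zs ne by (simp add: last_conv_nth)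
    ultimately show False using assms(2) unfolding covers_def by blast
  qed
  then have "length zs = 2" using l2 by simp
  then show ?thesis using zs by simp
qed

lemma qd_superadd:
  assumes "finite P" "a \<in> Pext P" "b \<in> Pext P" "c \<in> Pext P" "ele a b" "ele b c"
  shows "qdist P eps a b + qdist P eps b c \<le> qdist P eps a c"
proof -
  obtain xs where xs: "schain P xs" "hd xs = a" "last xs = b" "qdist P eps a b = eps * int (length xs - 1)"
    using qd_opt[OF assms(1,2,3,5)] by blast
  obtain ys where ys: "schain P ys" "hd ys = b" "last ys = c" "qdist P eps b c = eps * int (length ys - 1)"
    using qd_opt[OF assms(1,3,4,6)] by blast
  have xne: "xs \<noteq> []" and yne: "ys \<noteq> []" using xs ys by (auto simp: schain_def)
  have j: "schain P (xs @ tl ys)" using schain_join[OF xs(1) ys(1)] xs(3) ys(2) by simp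
  have "hd (xs @ tl ys) = a" using xs xne by simp
  moreover have "last (xs @ tl ys) = c"
    using xs ys yne by (cases ys) (auto)
  ultimately have "eps * int (length (xs @ tl ys) - 1) \<le> qdist P eps a c"
    using qd_ge[OF assms(1) j] by blast
  moreover have "length (xs @ tl ys) - 1 = (length xs - 1) + (length ys - 1)"
    using xne yne by (cases xs; cases ys) auto
  ultimately show ?thesis using xs ys by (simp add: algebra_simps)
qed

lemma qd_first_step:
  assumes "finite P" "a \<in> Pext P" "b \<in> Pext P" "eless a b"
  shows "\<exists>w. covers P a w \<and> ele w b \<and> qdist P eps a b = eps + qdist P eps w b"
proof -
  obtain zs where zs: "schain P zs" "hd zs = a" "last zs = b" "qdist P eps a b = eps * int (length zs - 1)"
    using qd_opt[OF assms(1,2,3)] assms(4) by blast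
  have ne: "zs \<noteq> []" using zs by (simp add: schain_def)
  obtain w ws where zsw: "zs = a # w # ws"
  proof (cases zs)
    case Nil then show ?thesis using ne by simp
  next
    case (Cons a' r)
    then have a': "a' = a" using zs by simp
    show ?thesis
    proof (cases r)
      case Nil then show ?thesis using Cons zs a' assms(4) by simp
    next
      case (Cons w ws) then show ?thesis using that \<open>zs = a' # r\<close> a' by simp
    qed
  qed
  have cw: "covers P a w" and sw: "schain P (w # ws)" using zs(1) zsw by (auto simp: schain_Cons)
  have wP: "w \<in> Pext P" using covers_in cw by blast
  have lw: "last (w # ws) = b" using zs zsw by simp
  have wb: "ele w b"
  proof (cases ws)
    case Nil then show ?thesis using lw by simp
  next
    case (Cons u us)
    then have "length (w#ws) \<ge> 2" by simp
    then show ?thesis using sorted_hd_last[OF schain_sorted[OF sw]] lw by simp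
  qed
  have "eps * int (length (w # ws) - 1) \<le> qdist P eps w b" using qd_ge[OF assms(1) sw _ lw] by simp
  then have le1: "qdist P eps a b \<le> eps + qdist P eps w b" using zs(4) zsw by (simp add: algebra_simps)
  have "qdist P eps a w + qdist P eps w b \<le> qdist P eps a b"
    using qd_superadd[OF assms(1,2) wP assms(3)] covers_less[OF cw] wb by blast
  then have "eps + qdist P eps w b \<le> qdist P eps a b" using qd_cover[OF assms(1) cw] by simp
  then show ?thesis using le1 cw wb by (intro exI[of _ w]) simp
qed

definition gF :: "('a ext \<Rightarrow> int) \<Rightarrow> 'a ext \<Rightarrow> int" where
  "gF f a = (case a of Fin v \<Rightarrow> f a | _ \<Rightarrow> 0)"

definition fsum :: "('a ext \<Rightarrow> int) \<Rightarrow> 'a ext list \<Rightarrow> int" where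
  "fsum f zs = sum_list (map (gF f) zs)"

lemma gF_simps[simp]: "gF f NegInf = 0" "gF f PosInf = 0" "gF f (Fin v) = f (Fin v)"
  by (simp_all add: gF_def)

lemma fsum_simps[simp]: "fsum f [] = 0" "fsum f (a # zs) = gF f a + fsum f zs"
  "fsum f (xs @ ys) = fsum f xs + fsum f ys"
  by (simp_all add: fsum_def)

lemma fsum_add: "fsum (\<lambda>a. f a + g a) zs = fsum f zs + fsum g zs"
  by (induction zs) (auto simp: gF_def split: ext.splits)

lemma sorted_nth_le: "sorted_wrt eless zs \<Longrightarrow> i \<le> j \<Longrightarrow> j < length zs \<Longrightarrow> ele (zs ! i) (zs ! j)"
  by (cases "i = j") (auto simp: sorted_wrt_iff_nth_less)

lemma sorted_between:
  assumes "sorted_wrt eless zs" "Suc i < length zs" "j < length zs"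
    "eless (zs ! i) w" "eless w (zs ! Suc i)"
  shows "(j \<le> i \<longrightarrow> eless (zs ! j) w) \<and> (Suc i \<le> j \<longrightarrow> eless w (zs ! j)) \<and> zs ! j \<noteq> w"
proof -
  have A: "j \<le> i \<longrightarrow> eless (zs ! j) w"
    using sorted_nth_le[OF assms(1), of j i] assms eless_trans by auto
  have B: "Suc i \<le> j \<longrightarrow> eless w (zs ! j)"
    using sorted_nth_le[OF assms(1), of "Suc i" j] assms eless_trans by auto
  have "zs ! j \<noteq> w"
  proof
    assume "zs ! j = w"
    then show False using A B eless_irrefl by (cases "j \<le> i") auto
  qed
  then show ?thesis using A B by blast
qed

lemma list_to_maxchain:
  assumes "schain P zs" "hd zs = NegInf" "last zs = PosInf"
  shows "maximal_chain P {v. Fin v \<in> set zs}"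
    and "(\<Sum>v\<in>{v. Fin v \<in> set zs}. f (Fin v)) = fsum f zs"
proof -
  let ?C = "{v. Fin v \<in> set zs}"
  have srt: "sorted_wrt eless zs" using schain_sorted assms(1) by blast
  have dis: "distinct zs" using sorted_eless_distinct srt by blast
  have ne: "zs \<noteq> []" using assms(1) by (simp add: schain_def)
  have sub: "set zs \<subseteq> Pext P" using assms(1) by (simp add: schain_def)
  have CP: "?C \<subseteq> P" using sub by auto
  have cmp: "\<forall>a\<in>?C. \<forall>b\<in>?C. a \<le> b \<or> b \<le> a"
  proof (intro ballI)
    fix a b assume ab: "a \<in> ?C" "b \<in> ?C"
    then obtain i j where ij: "i < length zs" "zs ! i = Fin a" "j < length zs" "zs ! j = Fin b"
      by (auto simp: in_set_conv_nth)
    show "a \<le> b \<or> b \<le> a"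
    proof (cases "i \<le> j")
      case True then show ?thesis using sorted_nth_le[OF srt True ij(3)] ij by auto
    next
      case False then show ?thesis using sorted_nth_le[OF srt _ ij(1), of j] ij by auto
    qed
  qed
  have ch: "is_chain P ?C" unfolding is_chain_def using CP cmp by blast
  show "maximal_chain P ?C" unfolding maximal_chain_def
  proof (intro conjI ch allI impI)
    fix D assume D: "is_chain P D \<and> ?C \<subseteq> D"
    show "D = ?C"
    proof (rule ccontr)
      assume "D \<noteq> ?C"
      then obtain v where v: "v \<in> D" "v \<notin> ?C" using D by blast
      have vP: "v \<in> P" using D v unfolding is_chain_def by blast
      have cmpv: "eless (zs ! i) (Fin v) \<or> eless (Fin v) (zs ! i)" if "i < length zs" for i
      proof (cases "zs ! i")
        case NegInf then show ?thesis by simp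
      next
        case PosInf then show ?thesis by simp
      next
        case (Fin c)
        then have "c \<in> ?C" using that nth_mem by fastforce
        then have "c \<in> D" "c \<noteq> v" using D v by auto
        then have "c < v \<or> v < c" using D v unfolding is_chain_def
          by (metis order.order_iff_strict)
        then show ?thesis using Fin by auto
      qed
      let ?I = "{i. i < length zs \<and> eless (zs ! i) (Fin v)}"
      have "0 \<in> ?I" using ne assms(2) by (simp add: hd_conv_nth[symmetric])
      then have Ine: "?I \<noteq> {}" by blast
      have Ifin: "finite ?I" by simp
      have im: "Max ?I \<in> ?I" "\<forall>j\<in>?I. j \<le> Max ?I"
        using Max_in[OF Ifin Ine] Max_ge[OF Ifin] by blast+
      define i where "i = Max ?I"
      have "zs ! (length zs - 1) = PosInf" using assms(3) ne by (simp add: last_conv_nth)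
      then have "length zs - 1 \<notin> ?I" by simp
      then have si: "Suc i < length zs" using im i_def
        by (metis (no_types, lifting) Suc_lessI diff_Suc_1 mem_Collect_eq)
      have "Suc i \<notin> ?I"
      proof
        assume "Suc i \<in> ?I"
        then have "Suc i \<le> i" using im(2) i_def by blast
        then show False by simp
      qed
      then have "eless (Fin v) (zs ! Suc i)" using cmpv[OF si] si by blast
      moreover have "eless (zs ! i) (Fin v)" using im i_def by simp
      moreover have "covers P (zs ! i) (zs ! Suc i)"
        using assms(1) si by (simp add: schain_def successively_nth)
      ultimately show False using vP unfolding covers_def by auto
    qed
  qed
  have "(\<Sum>v\<in>?C. f (Fin v)) = (\<Sum>a\<in>Fin ` ?C. gF f a)"
    by (subst sum.reindex) (auto simp: inj_on_def)
  also have "\<dots> = (\<Sum>a\<in>set zs. gF f a)"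
  proof (rule sum.mono_neutral_left)
    show "\<forall>i\<in>set zs - Fin ` ?C. gF f i = 0"
    proof
      fix a assume "a \<in> set zs - Fin ` ?C"
      then show "gF f a = 0" by (cases a) auto
    qed
  qed auto
  also have "\<dots> = fsum f zs" unfolding fsum_def using dis by (simp add: sum_list_distinct_conv_sum_set)
  finally show "(\<Sum>v\<in>?C. f (Fin v)) = fsum f zs" .
qed

lemma chain_sorted_list:
  fixes C :: "'a::order set"
  shows "finite C \<Longrightarrow> (\<forall>a\<in>C. \<forall>b\<in>C. a \<le> b \<or> b \<le> a) \<Longrightarrow> \<exists>ls. set ls = C \<and> sorted_wrt (<) ls"
proof (induction C rule: finite_induct)
  case empty then show ?case by simp
next
  case (insert a C)
  then obtain ls where ls: "set ls = C" "sorted_wrt (<) ls" by blast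
  define ls' where "ls' = filter (\<lambda>b. b < a) ls @ [a] @ filter (\<lambda>b. a < b) ls"
  have "set ls' = insert a C"
  proof -
    have "\<forall>b\<in>C. b < a \<or> a < b" using insert by (metis insertCI order.order_iff_strict)
    then show ?thesis unfolding ls'_def using ls by auto
  qed
  moreover have "sorted_wrt (<) ls'"
    unfolding ls'_def using ls(2) by (auto simp: sorted_wrt_append sorted_wrt_filter)
  ultimately show ?case by blast
qed

lemma maxchain_to_list:
  assumes "finite P" "maximal_chain P C"
  shows "\<exists>zs. schain P zs \<and> hd zs = NegInf \<and> last zs = PosInf \<and> {v. Fin v \<in> set zs} = C"
proof -
  have CP: "C \<subseteq> P" and cmp: "\<forall>a\<in>C. \<forall>b\<in>C. a \<le> b \<or> b \<le> a"
    using assms(2) unfolding maximal_chain_def is_chain_def by blast+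
  have finC: "finite C" using CP assms(1) finite_subset by blast
  obtain ls where ls: "set ls = C" "sorted_wrt (<) ls" using chain_sorted_list[OF finC cmp] by blast
  define zs where "zs = NegInf # map Fin ls @ [PosInf]"
  have srt: "sorted_wrt eless zs" unfolding zs_def using ls(2)
    by (auto simp: sorted_wrt_append sorted_wrt_map elim: sorted_wrt_mono_rel[rotated])
  have setz: "set zs \<subseteq> Pext P" unfolding zs_def using ls(1) CP by auto
  have Cz: "{v. Fin v \<in> set zs} = C" unfolding zs_def using ls(1) by auto
  have cov: "covers P (zs ! i) (zs ! Suc i)" if si: "Suc i < length zs" for i
  proof -
    have in1: "zs ! i \<in> Pext P" "zs ! Suc i \<in> Pext P" using setz si nth_mem by (metis Suc_lessD subsetD)+
    have lt: "eless (zs ! i) (zs ! Suc i)" using srt si by (simp add: sorted_wrt_iff_nth_less)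
    have "\<not> (\<exists>w\<in>Pext P. eless (zs ! i) w \<and> eless w (zs ! Suc i))"
    proof
      assume "\<exists>w\<in>Pext P. eless (zs ! i) w \<and> eless w (zs ! Suc i)"
      then obtain w where w: "w \<in> Pext P" "eless (zs ! i) w" "eless w (zs ! Suc i)" by blast
      have bt: "\<And>j. j < length zs \<Longrightarrow> (eless (zs ! j) w \<or> eless w (zs ! j)) \<and> zs ! j \<noteq> w"
        using sorted_between[OF srt si _ w(2,3)] by (metis not_less_eq_eq)
      obtain v where v: "w = Fin v" "v \<in> P" using w by (cases w) auto
      have "is_chain P (insert v C)" unfolding is_chain_def
      proof (intro conjI ballI)
        show "insert v C \<subseteq> P" using CP v by blast
        fix a b assume ab: "a \<in> insert v C" "b \<in> insert v C"
        have vc: "c < v \<or> v < c" if "c \<in> C" for c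
        proof -
          have "Fin c \<in> set zs" using that Cz by blast
          then obtain j where "j < length zs" "zs ! j = Fin c" by (auto simp: in_set_conv_nth)
          then show ?thesis using bt v(1) by fastforce
        qed
        show "a \<le> b \<or> b \<le> a" using ab cmp vc by (auto intro: less_imp_le)
      qed
      then have "insert v C = C" using assms(2) unfolding maximal_chain_def by blast
      then have "Fin v \<in> set zs" using Cz by blast
      then obtain j where "j < length zs" "zs ! j = Fin v" by (auto simp: in_set_conv_nth)
      then show False using bt v(1) by blast
    qed
    then show ?thesis unfolding covers_def using in1 lt by blast
  qed
  have "schain P zs" unfolding schain_def using setz cov by (auto simp: zs_def successively_conv_nth)
  moreover have "hd zs = NegInf" "last zs = PosInf" by (simp_all add: zs_def)
  ultimately show ?thesis using Cz by blast
qed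


lemma mid_extract:
  assumes "schain P zs" "hd zs = a" "last zs = b" "eless a b"
  shows "\<exists>ms. zs = a # ms @ [b] \<and> (\<forall>m\<in>set ms. \<exists>v\<in>P. m = Fin v)"
proof -
  have srt: "sorted_wrt eless zs" using schain_sorted[OF assms(1)] .
  have ne: "zs \<noteq> []" using assms(1) by (simp add: schain_def)
  obtain rest where r: "zs = a # rest" using ne assms(2) by (cases zs) auto
  have rne: "rest \<noteq> []" using r assms(3,4) by auto
  obtain ms b' where ms: "rest = ms @ [b']" using rne by (cases rest rule: rev_cases) auto
  have bb: "b' = b" using assms(3) r ms by simp
  have zs: "zs = a # ms @ [b]" using r ms bb by simp
  have "\<forall>m\<in>set ms. \<exists>v\<in>P. m = Fin v"
  proof
    fix m assume m: "m \<in> set ms"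
    have "eless a m" "eless m b" using srt m unfolding zs by (auto simp: sorted_wrt_append)
    moreover have "m \<in> Pext P" using assms(1) m unfolding zs schain_def by auto
    ultimately show "\<exists>v\<in>P. m = Fin v" by (cases m) auto
  qed
  then show ?thesis using zs by blast
qed

lemma fsum_lb: "(\<forall>a\<in>set ms. \<exists>v\<in>P. a = Fin v) \<Longrightarrow> (\<forall>v\<in>P. c \<le> f (Fin v)) \<Longrightarrow> c * int (length ms) \<le> fsum f ms"
proof (induction ms)
  case Nil then show ?case by simp
next
  case (Cons a ms)
  then obtain v where v: "v \<in> P" "a = Fin v" by auto
  then have "c \<le> gF f a" using Cons.prems(2) by simp
  then show ?case using Cons by (simp add: algebra_simps)
qed

lemma join_chain:
  assumes "schain P L1" "hd L1 = NegInf" "last L1 = a" "schain P (a # ms @ [b])"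
    "schain P L2" "hd L2 = b" "last L2 = PosInf"
  shows "maximal_chain P {v. Fin v \<in> set (L1 @ ms @ L2)}"
    and "(\<Sum>v\<in>{v. Fin v \<in> set (L1 @ ms @ L2)}. f (Fin v)) = fsum f L1 + fsum f ms + fsum f L2"
proof -
  have n1: "L1 \<noteq> []" and n2: "L2 \<noteq> []" using assms(1,5) by (auto simp: schain_def)
  have j1: "schain P (L1 @ tl (a # ms @ [b]))" using schain_join[OF assms(1,4)] assms(3) by simp
  then have j1': "schain P (L1 @ ms @ [b])" by simp
  have "last (L1 @ ms @ [b]) = hd L2" using assms(6) by simp
  then have j2: "schain P ((L1 @ ms @ [b]) @ tl L2)" using schain_join[OF j1' assms(5)] by blast
  have L2e: "L2 = b # tl L2" using n2 assms(6) by (cases L2) auto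
  have eq: "(L1 @ ms @ [b]) @ tl L2 = L1 @ ms @ L2" using L2e by (metis append.assoc append_Cons append_Nil)
  have s: "schain P (L1 @ ms @ L2)" using j2 eq by simp
  have h: "hd (L1 @ ms @ L2) = NegInf" using n1 assms(2) by simp
  have l: "last (L1 @ ms @ L2) = PosInf" using n2 assms(7) by simp
  show "maximal_chain P {v. Fin v \<in> set (L1 @ ms @ L2)}" using list_to_maxchain(1)[OF s h l] .
  show "(\<Sum>v\<in>{v. Fin v \<in> set (L1 @ ms @ L2)}. f (Fin v)) = fsum f L1 + fsum f ms + fsum f L2"
    using list_to_maxchain(2)[OF s h l, of f] by simp
qed

lemma S_chain: "f \<in> S P m \<Longrightarrow> maximal_chain P C \<Longrightarrow> (\<Sum>v\<in>C. f (Fin v)) + m \<le> f NegInf"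
  unfolding S_def by blast
lemma S_pos: "f \<in> S P m \<Longrightarrow> \<forall>v\<in>P. m \<le> f (Fin v)"
  unfolding S_def by blast
locale setting =
  fixes P :: "'a::order set" and eps :: int and t :: nat and x y :: "nat \<Rightarrow> 'a"
  assumes finP: "finite P" and epsv: "eps \<in> {1, -1}" and NN: "condN' P t x y"
    and RR: "q_reduced P eps t x y"
begin

abbreviation "X \<equiv> Xs x"
abbreviation "Y \<equiv> Ys t y"
abbreviation "qd \<equiv> qdist P eps"
abbreviation "qs \<equiv> qseq P eps X Y"

definition al where "al l = qd (X l) (Y l)"
definition be where "be l = qd (X (Suc l)) (Y l)"
definition q where "q = qs 0 t"
definition A where "A l = qs 0 l - al l"
definition B where "B m = qs m t - al m"

lemma X0[simp]: "X 0 = NegInf" by (simp add: Xs_def)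
lemma XS[simp]: "X (Suc l) = Fin (x (Suc l))" by (simp add: Xs_def)
lemma Yt[simp]: "Y t = PosInf" by (simp add: Ys_def)
lemma Ylt: "m \<noteq> t \<Longrightarrow> Y m = Fin (y m)" by (simp add: Ys_def)

lemma XP: "l \<le> t \<Longrightarrow> X l \<in> Pext P"
  using NN by (cases l) (auto simp: condN'_def)
lemma YP: "m \<le> t \<Longrightarrow> Y m \<in> Pext P"
  using NN by (cases "m = t") (auto simp: condN'_def Ylt)
lemma XnP: "X l \<noteq> PosInf" by (cases l) auto
lemma YnN: "Y m \<noteq> NegInf" by (cases "m = t") (auto simp: Ylt)

lemma XY: "l \<le> t \<Longrightarrow> eless (X l) (Y l)"
proof -
  assume l: "l \<le> t"
  show ?thesis
  proof (cases l)
    case 0 then show ?thesis using eless_NegInf[OF YnN[of 0]] by simp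
  next
    case (Suc k)
    show ?thesis
    proof (cases "l = t")
      case True then show ?thesis using Suc eless_toPosInf[OF XnP[of l]] by simp
    next
      case False then show ?thesis using Suc l NN by (auto simp: condN'_def Ylt)
    qed
  qed
qed

lemma XY1: "l < t \<Longrightarrow> eless (X (Suc l)) (Y l)"
  using NN by (auto simp: condN'_def Ylt)

lemma qs_refl: "qs i i = al i" by (simp add: qseq_def al_def)

lemma qs_step: "i \<le> k \<Longrightarrow> qs i (Suc k) = qs i k + al (Suc k) - be k"
  by (simp add: qseq_def al_def be_def)

lemma qs_split0: "j \<le> k \<Longrightarrow> i \<le> j \<Longrightarrow> qs i k = qs i j + qs j k - al j"
proof (induction k rule: dec_induct)
  case base then show ?case by (simp add: qs_refl)
next
  case (step k)
  then show ?case using qs_step[of i k] qs_step[of j k] by simp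
qed

lemma qs_split: "i \<le> j \<Longrightarrow> j \<le> k \<Longrightarrow> qs i k = qs i j + qs j k - al j"
  using qs_split0 by blast

lemma qd_XY: "l \<le> t \<Longrightarrow> m \<le> t \<Longrightarrow> eless (X l) (Y m) \<Longrightarrow> A l + qd (X l) (Y m) + B m \<le> q"
proof -
  assume l: "l \<le> t" and m: "m \<le> t" and lt: "eless (X l) (Y m)"
  consider "l < m" | "l = m" | "l = Suc m" | "Suc (Suc m) \<le> l" by linarith
  then show ?thesis
  proof cases
    case 1
    have R: "\<forall>i j. i < j \<and> j \<le> t \<and> eless (X i) (Y j) \<longrightarrow> qd (X i) (Y j) < qs i j"
      using RR unfolding q_reduced_def .
    have a: "qd (X l) (Y m) < qs l m" using R m lt 1 by blast
    have b: "qs 0 m = qs 0 l + qs l m - al l" using qs_split[of 0 l m] 1 by simp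
    have c: "qs 0 t = qs 0 m + qs m t - al m" using qs_split[of 0 m t] m by simp
    have "A l + qd (X l) (Y m) + B m = qs 0 l - al l + qd (X l) (Y m) + (qs m t - al m)"
      unfolding A_def B_def by (rule refl)
    then show ?thesis using a b c unfolding q_def by linarith
  next
    case 2
    have c: "qs 0 t = qs 0 l + qs l t - al l" using qs_split[of 0 l t] l by simp
    have "A l + qd (X l) (Y m) + B m = qs 0 l - al l + al l + (qs l t - al l)"
      unfolding A_def B_def al_def 2 by (rule refl)
    then show ?thesis using c unfolding q_def by linarith
  next
    case 3
    have a: "qs 0 (Suc m) = qs 0 m + al (Suc m) - be m" using qs_step[of 0 m] by simp
    have c: "qs 0 t = qs 0 m + qs m t - al m" using qs_split[of 0 m t] m by simp
    have "A l + qd (X l) (Y m) + B m = qs 0 (Suc m) - al (Suc m) + be m + (qs m t - al m)"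
      unfolding A_def B_def be_def 3 by (rule refl)
    then show ?thesis using a c unfolding q_def by linarith
  next
    case 4
    then obtain k where k: "l = Suc k" by (cases l) auto
    have mt: "m \<noteq> t" using 4 l by simp
    have "eless (Fin (x l)) (Fin (y m))" using lt k mt by (simp add: Ylt)
    then have xy: "x l < y m" by simp
    have "\<forall>i j. i + 2 \<le> j \<and> j \<le> t \<longrightarrow> \<not> x j < y i" using NN unfolding condN'_def by blast
    then have "\<not> (x l < y m)" using 4 l by simp
    then show ?thesis using xy by blast
  qed
qed

lemma A0[simp]: "A 0 = 0" by (simp add: A_def qs_refl)
lemma Bt[simp]: "B t = 0" by (simp add: B_def qs_refl)
lemma q_AB: "l \<le> t \<Longrightarrow> q = A l + al l + B l"
  using qs_split[of 0 l t] unfolding A_def B_def q_def by simp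
lemma q_AB1: "l < t \<Longrightarrow> q = A (Suc l) + be l + B l"
  using qs_step[of 0 l] qs_split[of 0 l t] unfolding A_def B_def q_def by simp

definition nu where "nu z = Max ((\<lambda>m. B m + qd z (Y m)) ` {m. m \<le> t \<and> ele z (Y m)})"

lemma ele_Pos: "ele z PosInf" by (cases z) auto

lemma nu_fin: "finite ((\<lambda>m. B m + qd z (Y m)) ` {m. m \<le> t \<and> ele z (Y m)})" by simp
lemma nu_ne: "(\<lambda>m. B m + qd z (Y m)) ` {m. m \<le> t \<and> ele z (Y m)} \<noteq> {}"
proof -
  have "t \<in> {m. m \<le> t \<and> ele z (Y m)}" using ele_Pos by simp
  then show ?thesis by blast
qed

lemma nu_ge: "m \<le> t \<Longrightarrow> ele z (Y m) \<Longrightarrow> B m + qd z (Y m) \<le> nu z"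
  unfolding nu_def by (rule Max_ge[OF nu_fin]) blast

lemma nu_in: "\<exists>m. m \<le> t \<and> ele z (Y m) \<and> nu z = B m + qd z (Y m)"
proof -
  have "nu z \<in> (\<lambda>m. B m + qd z (Y m)) ` {m. m \<le> t \<and> ele z (Y m)}"
    unfolding nu_def by (rule Max_in[OF nu_fin nu_ne])
  then show ?thesis by blast
qed

lemma nu_Pos: "nu PosInf = 0"
proof -
  obtain m where m: "m \<le> t" "ele PosInf (Y m)" "nu PosInf = B m + qd PosInf (Y m)" using nu_in by blast
  have "m = t"
  proof (rule ccontr)
    assume "m \<noteq> t" then show False using m(2) by (simp add: Ylt)
  qed
  then show ?thesis using m qd_refl[OF finP, of PosInf] by simp
qed

lemma nu_cover: "covers P z w \<Longrightarrow> nu w + eps \<le> nu z"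
proof -
  assume c: "covers P z w"
  have zP: "z \<in> Pext P" and wP: "w \<in> Pext P" and zw: "eless z w" using c covers_in covers_less by blast+
  obtain m where m: "m \<le> t" "ele w (Y m)" "nu w = B m + qd w (Y m)" using nu_in by blast
  have zy: "ele z (Y m)" using m(2) zw eless_trans by blast
  have "qd z w + qd w (Y m) \<le> qd z (Y m)"
    using qd_superadd[OF finP zP wP YP[OF m(1)]] zw m(2) by blast
  then have "eps + qd w (Y m) \<le> qd z (Y m)" using qd_cover[OF finP c] by simp
  then show ?thesis using nu_ge[OF m(1) zy] m(3) by linarith
qed

lemma nu_Neg: "nu NegInf \<le> q"
proof -
  obtain m where m: "m \<le> t" "ele NegInf (Y m)" "nu NegInf = B m + qd NegInf (Y m)" using nu_in by blast
  have "eless (X 0) (Y m)" using eless_NegInf[OF YnN[of m]] by simp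
  then have "A 0 + qd (X 0) (Y m) + B m \<le> q" using qd_XY[OF _ m(1), of 0] by blast
  then show ?thesis using m(3) by simp
qed

definition Mup where "Mup z = Max (nu ` {w. covers P z w})"
definition Phi where "Phi z = q - eps - Mup z"
definition Mlow where "Mlow z = Max (Phi ` {u. covers P u z})"
definition xi where "xi a = (case a of NegInf \<Rightarrow> q | PosInf \<Rightarrow> 0
   | Fin v \<Rightarrow> if v \<in> P then max (nu a - Mup a) (Phi a - Mlow a) else 0)"

lemma UC_fin: "finite {w. covers P z w}"
  by (rule finite_subset[OF _ finite_Pext[OF finP]]) (auto dest: covers_in)
lemma LC_fin: "finite {u. covers P u z}"
  by (rule finite_subset[OF _ finite_Pext[OF finP]]) (auto dest: covers_in)

lemma Mup_ge: "covers P z w \<Longrightarrow> nu w \<le> Mup z"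
  unfolding Mup_def by (rule Max_ge) (use UC_fin in auto)

lemma Mup_in: "z \<in> Pext P \<Longrightarrow> z \<noteq> PosInf \<Longrightarrow> \<exists>w. covers P z w \<and> Mup z = nu w"
proof -
  assume z: "z \<in> Pext P" "z \<noteq> PosInf"
  obtain w where "covers P z w" using cover_up[OF finP z(1) _ eless_toPosInf[OF z(2)]] by auto
  then have ne: "nu ` {w. covers P z w} \<noteq> {}" by blast
  have "Mup z \<in> nu ` {w. covers P z w}" unfolding Mup_def using Max_in[OF _ ne] UC_fin by blast
  then show ?thesis by blast
qed

lemma Mlow_ge: "covers P u z \<Longrightarrow> Phi u \<le> Mlow z"
  unfolding Mlow_def by (rule Max_ge) (use LC_fin in auto)

lemma Mlow_in: "z \<in> Pext P \<Longrightarrow> z \<noteq> NegInf \<Longrightarrow> \<exists>u. covers P u z \<and> Mlow z = Phi u"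
proof -
  assume z: "z \<in> Pext P" "z \<noteq> NegInf"
  obtain u where "covers P u z" using cover_down[OF finP _ z(1) eless_NegInf[OF z(2)]] by auto
  then have ne: "Phi ` {u. covers P u z} \<noteq> {}" by blast
  have "Mlow z \<in> Phi ` {u. covers P u z}" unfolding Mlow_def using Max_in[OF _ ne] LC_fin by blast
  then show ?thesis by blast
qed

lemma Phi_Neg_ge: "0 \<le> Phi NegInf"
proof -
  obtain w where w: "covers P NegInf w" "Mup NegInf = nu w" using Mup_in[of NegInf] by auto
  then show ?thesis using nu_cover[OF w(1)] nu_Neg unfolding Phi_def by linarith
qed

lemma Phi_Neg_le: "Phi NegInf \<le> 0"
proof -
  have l: "eless NegInf (Y 0)" using eless_NegInf[OF YnN[of 0]] .
  obtain w where w: "covers P NegInf w" "ele w (Y 0)" "qd NegInf (Y 0) = eps + qd w (Y 0)"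
    using qd_first_step[OF finP _ YP l] by auto
  have "B 0 + qd w (Y 0) \<le> nu w" using nu_ge w(2) by simp
  moreover have "q = A 0 + al 0 + B 0" using q_AB[of 0] by blast
  moreover have "al 0 = qd NegInf (Y 0)" by (simp add: al_def)
  moreover have "nu w \<le> Mup NegInf" using Mup_ge[OF w(1)] .
  ultimately show ?thesis using w(3) unfolding Phi_def by simp
qed

lemma Phi_X: "l \<le> t \<Longrightarrow> A l \<le> Phi (X l)"
proof -
  assume l: "l \<le> t"
  obtain w where w: "covers P (X l) w" "Mup (X l) = nu w" using Mup_in[OF XP[OF l] XnP] by blast
  obtain m where m: "m \<le> t" "ele w (Y m)" "nu w = B m + qd w (Y m)" using nu_in by blast
  have xw: "eless (X l) w" using covers_less[OF w(1)] .
  have wP: "w \<in> Pext P" using covers_in w(1) by blast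
  have xy: "eless (X l) (Y m)" using xw m(2) eless_trans by blast
  have "qd (X l) w + qd w (Y m) \<le> qd (X l) (Y m)"
    using qd_superadd[OF finP XP[OF l] wP YP[OF m(1)]] xw m(2) by blast
  then have "eps + qd w (Y m) \<le> qd (X l) (Y m)" using qd_cover[OF finP w(1)] by simp
  moreover have "A l + qd (X l) (Y m) + B m \<le> q" using qd_XY[OF l m(1) xy] .
  ultimately show ?thesis using w(2) m(3) unfolding Phi_def by linarith
qed

lemma xi_Fin: "v \<in> P \<Longrightarrow> xi (Fin v) = max (nu (Fin v) - Mup (Fin v)) (Phi (Fin v) - Mlow (Fin v))"
  by (simp add: xi_def)

lemma xi_eps: "v \<in> P \<Longrightarrow> eps \<le> xi (Fin v)"
proof -
  assume v: "v \<in> P"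
  obtain w where w: "covers P (Fin v) w" "Mup (Fin v) = nu w" using Mup_in[of "Fin v"] v by auto
  show ?thesis using nu_cover[OF w(1)] w(2) xi_Fin[OF v] by simp
qed

lemma UB: "schain P (NegInf # zs) \<Longrightarrow> PosInf \<notin> set zs \<Longrightarrow> fsum xi zs \<le> Phi (last (NegInf # zs))"
proof (induction zs rule: rev_induct)
  case Nil then show ?case using Phi_Neg_ge by simp
next
  case (snoc z zs)
  have "schain P ((NegInf # zs) @ [z])" using snoc.prems(1) by simp
  from iffD1[OF schain_snoc this]
  have zP: "z \<in> Pext P" and c: "covers P (last (NegInf # zs)) z" and s: "schain P (NegInf # zs)"
    by blast+
  have IH: "fsum xi zs \<le> Phi (last (NegInf # zs))" using snoc s by simp
  have "z \<noteq> NegInf" using covers_less[OF c] by auto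
  moreover have "z \<noteq> PosInf" using snoc.prems(2) by auto
  ultimately obtain v where v: "z = Fin v" "v \<in> P" using zP by (cases z) auto
  let ?u = "last (NegInf # zs)"
  have L: "last (NegInf # zs @ [z]) = z" by simp
  have F: "fsum xi (zs @ [z]) = fsum xi zs + xi z" using v by simp
  show ?case
  proof (cases "nu z - Mup z \<ge> Phi z - Mlow z")
    case True
    then have "xi z = nu z - Mup z" using xi_Fin[OF v(2)] v(1) by simp
    moreover have "Phi ?u \<le> q - eps - nu z" using Mup_ge[OF c] unfolding Phi_def by simp
    ultimately show ?thesis using IH F L unfolding Phi_def by simp
  next
    case False
    then have "xi z = Phi z - Mlow z" using xi_Fin[OF v(2)] v(1) by simp
    moreover have "Phi ?u \<le> Mlow z" using Mlow_ge[OF c] .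
    ultimately show ?thesis using IH F L by simp
  qed
qed

lemma xi_in_S: "xi \<in> S P eps"
  unfolding S_def
proof (intro CollectI conjI allI impI ballI)
  fix a assume "a \<notin> Pminus P"
  then show "xi a = 0" by (cases a) (auto simp: Pminus_def xi_def)
next
  fix v assume "v \<in> P" then show "eps \<le> xi (Fin v)" using xi_eps by blast
next
  fix C assume C: "maximal_chain P C"
  obtain zs where zs: "schain P zs" "hd zs = NegInf" "last zs = PosInf" "{v. Fin v \<in> set zs} = C"
    using maxchain_to_list[OF finP C] by blast
  have sumeq: "(\<Sum>v\<in>C. xi (Fin v)) = fsum xi zs" using list_to_maxchain(2)[OF zs(1-3)] zs(4) by simp
  have srt: "sorted_wrt eless zs" using schain_sorted[OF zs(1)] .
  have ne: "zs \<noteq> []" using zs(1) by (simp add: schain_def)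
  obtain ws where ws: "zs = NegInf # ws" using zs(2) ne by (cases zs) auto
  have wne: "ws \<noteq> []" using ws zs(3) by auto
  obtain rs where rs: "ws = rs @ [PosInf]" using wne zs(3) ws by (cases ws rule: rev_cases) auto
  have zs2: "zs = (NegInf # rs) @ [PosInf]" using ws rs by simp
  from iffD1[OF schain_snoc zs(1)[unfolded zs2]]
  have s2: "schain P (NegInf # rs)" and c: "covers P (last (NegInf # rs)) PosInf"
    by blast+
  have np: "PosInf \<notin> set rs"
  proof
    assume "PosInf \<in> set rs"
    then have "eless PosInf PosInf" using srt unfolding zs2 by (auto simp: sorted_wrt_append)
    then show False by simp
  qed
  have ub: "fsum xi rs \<le> Phi (last (NegInf # rs))" using UB[OF s2 np] .
  let ?u = "last (NegInf # rs)"
  have uP: "?u \<in> Pext P" using covers_in c by blast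
  have unp: "?u \<noteq> PosInf" using covers_less[OF c] by (metis eless_PosInf)
  obtain w where w: "covers P ?u w" "Mup ?u = nu w" using Mup_in[OF uP unp] by blast
  have "w = PosInf"
  proof (rule ccontr)
    assume "w \<noteq> PosInf"
    then have "eless w PosInf" by (rule eless_toPosInf)
    moreover have "eless ?u w" "w \<in> Pext P" using w(1) covers_less covers_in by blast+
    ultimately show False using c unfolding covers_def by blast
  qed
  then have "Phi ?u = q - eps" using w(2) nu_Pos unfolding Phi_def by simp
  moreover have "fsum xi zs = fsum xi rs" unfolding zs2 by simp
  ultimately show "(\<Sum>v\<in>C. xi (Fin v)) + eps \<le> xi NegInf" using sumeq ub by (simp add: xi_def)
qed

lemma suffix_chain:
  "z \<in> Pext P \<Longrightarrow> z \<noteq> NegInf \<Longrightarrow> \<exists>L. schain P L \<and> hd L = z \<and> last L = PosInf \<and> nu z \<le> fsum xi L"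
proof (induction "card {w\<in>Pext P. eless z w}" arbitrary: z rule: less_induct)
  case less
  show ?case
  proof (cases z)
    case NegInf then show ?thesis using less by simp
  next
    case PosInf
    then show ?thesis using nu_Pos by (intro exI[of _ "[PosInf]"]) (simp add: schain_def)
  next
    case (Fin v)
    then have vP: "v \<in> P" using less by simp
    obtain w where w: "covers P z w" "Mup z = nu w" using Mup_in[OF less(2)] Fin by auto
    have wP: "w \<in> Pext P" and zw: "eless z w" using w(1) covers_in covers_less by blast+
    have wn: "w \<noteq> NegInf" using zw by auto
    have sub: "{u\<in>Pext P. eless w u} \<subset> {u\<in>Pext P. eless z u}"
    proof
      show "{u\<in>Pext P. eless w u} \<subseteq> {u\<in>Pext P. eless z u}" using zw eless_trans by blast
      have "w \<in> {u\<in>Pext P. eless z u}" using wP zw by blast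
      moreover have "w \<notin> {u\<in>Pext P. eless w u}" by simp
      ultimately show "{u\<in>Pext P. eless w u} \<noteq> {u\<in>Pext P. eless z u}" by blast
    qed
    have fin: "finite {u\<in>Pext P. eless z u}" using finite_Pext[OF finP] by simp
    have "card {u\<in>Pext P. eless w u} < card {u\<in>Pext P. eless z u}"
      using psubset_card_mono[OF fin sub] .
    then obtain L where L: "schain P L" "hd L = w" "last L = PosInf" "nu w \<le> fsum xi L"
      using less(1) wP wn by blast
    have Lne: "L \<noteq> []" using L(1) by (simp add: schain_def)
    have "schain P (z # L)" using less(2) w(1) L Lne by (simp add: schain_Cons)
    moreover have "fsum xi (z # L) = xi z + fsum xi L" using Fin by simp
    moreover have "nu z - Mup z \<le> xi z" using xi_Fin[OF vP] Fin by simp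
    ultimately show ?thesis using L Lne w(2) by (intro exI[of _ "z # L"]) simp
  qed
qed

lemma prefix_chain:
  "z \<in> Pext P \<Longrightarrow> z \<noteq> PosInf \<Longrightarrow> \<exists>L. schain P L \<and> hd L = NegInf \<and> last L = z \<and> Phi z - Phi NegInf \<le> fsum xi L"
proof (induction "card {u\<in>Pext P. eless u z}" arbitrary: z rule: less_induct)
  case less
  show ?case
  proof (cases z)
    case PosInf then show ?thesis using less by simp
  next
    case NegInf
    then show ?thesis by (intro exI[of _ "[NegInf]"]) (simp add: schain_def)
  next
    case (Fin v)
    then have vP: "v \<in> P" using less by simp
    obtain u where u: "covers P u z" "Mlow z = Phi u" using Mlow_in[OF less(2)] Fin by auto
    have uP: "u \<in> Pext P" and uz: "eless u z" using u(1) covers_in covers_less by blast+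
    have un: "u \<noteq> PosInf" using uz by auto
    have sub: "{w\<in>Pext P. eless w u} \<subset> {w\<in>Pext P. eless w z}"
    proof
      show "{w\<in>Pext P. eless w u} \<subseteq> {w\<in>Pext P. eless w z}" using uz eless_trans by blast
      have "u \<in> {w\<in>Pext P. eless w z}" using uP uz by blast
      moreover have "u \<notin> {w\<in>Pext P. eless w u}" by simp
      ultimately show "{w\<in>Pext P. eless w u} \<noteq> {w\<in>Pext P. eless w z}" by blast
    qed
    have fin: "finite {w\<in>Pext P. eless w z}" using finite_Pext[OF finP] by simp
    have "card {w\<in>Pext P. eless w u} < card {w\<in>Pext P. eless w z}"
      using psubset_card_mono[OF fin sub] .
    then obtain L where L: "schain P L" "hd L = NegInf" "last L = u" "Phi u - Phi NegInf \<le> fsum xi L"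
      using less(1) uP un by blast
    have Lne: "L \<noteq> []" using L(1) by (simp add: schain_def)
    have "schain P (L @ [z])" using less(2) u(1) L Lne by (simp add: schain_snoc)
    moreover have "fsum xi (L @ [z]) = fsum xi L + xi z" using Fin by simp
    moreover have "Phi z - Mlow z \<le> xi z" using xi_Fin[OF vP] Fin by simp
    ultimately show ?thesis using L Lne u(2) by (intro exI[of _ "L @ [z]"]) simp
  qed
qed

lemma xi_gen: "is_generator P eps xi"
  unfolding is_generator_def
proof (intro conjI xi_in_S notI)
  assume "\<exists>\<xi>1 \<xi>2. \<xi>1 \<in> S P 0 \<and> 0 < \<xi>1 NegInf \<and> \<xi>2 \<in> S P eps \<and> xi = (\<lambda>a. \<xi>1 a + \<xi>2 a)"
  then obtain f1 f2 where f1: "f1 \<in> S P 0" and d: "0 < f1 NegInf" and f2: "f2 \<in> S P eps"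
    and xe: "xi = (\<lambda>a. f1 a + f2 a)" by blast
  define d1 where "d1 = f1 NegInf"
  have xiN: "xi NegInf = q" by (simp add: xi_def)
  have f2N: "f2 NegInf = q - d1" using xiN xe d1_def by (metis add_diff_cancel_left')
  have fs: "fsum xi L = fsum f1 L + fsum f2 L" for L using xe fsum_add by simp
  have f1p: "\<forall>v\<in>P. 0 \<le> f1 (Fin v)" using S_pos[OF f1] .
  have f2p: "\<forall>v\<in>P. eps \<le> f2 (Fin v)" using S_pos[OF f2] .
  have xip: "\<forall>v\<in>P. eps \<le> xi (Fin v)" using S_pos[OF xi_in_S] .
  have "\<forall>l. \<exists>L. l \<le> t \<longrightarrow> schain P L \<and> hd L = NegInf \<and> last L = X l \<and> A l \<le> fsum xi L"
  proof
    fix l show "\<exists>L. l \<le> t \<longrightarrow> schain P L \<and> hd L = NegInf \<and> last L = X l \<and> A l \<le> fsum xi L"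
    proof (cases "l \<le> t")
      case True
      obtain L where L: "schain P L" "hd L = NegInf" "last L = X l" "Phi (X l) - Phi NegInf \<le> fsum xi L"
        using prefix_chain[OF XP[OF True] XnP] by blast
      then show ?thesis using Phi_X[OF True] Phi_Neg_le by (intro exI[of _ L]) simp
    qed simp
  qed
  then obtain pre where pre: "\<And>l. l \<le> t \<Longrightarrow> schain P (pre l) \<and> hd (pre l) = NegInf \<and> last (pre l) = X l \<and> A l \<le> fsum xi (pre l)"
    by (metis choice)
  have pre0: "pre 0 = [NegInf]" using schain_single[of P "pre 0"] pre[of 0] by simp
  have "\<forall>l. \<exists>L. l \<le> t \<longrightarrow> schain P L \<and> hd L = Y l \<and> last L = PosInf \<and> B l \<le> fsum xi L"
  proof
    fix l show "\<exists>L. l \<le> t \<longrightarrow> schain P L \<and> hd L = Y l \<and> last L = PosInf \<and> B l \<le> fsum xi L"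
    proof (cases "l \<le> t")
      case True
      obtain L where L: "schain P L" "hd L = Y l" "last L = PosInf" "nu (Y l) \<le> fsum xi L"
        using suffix_chain[OF YP[OF True] YnN] by blast
      have "B l + qd (Y l) (Y l) \<le> nu (Y l)" using nu_ge[OF True] by simp
      then show ?thesis using L qd_refl[OF finP YP[OF True]] by (intro exI[of _ L]) simp
    qed simp
  qed
  then obtain suf where suf: "\<And>l. l \<le> t \<Longrightarrow> schain P (suf l) \<and> hd (suf l) = Y l \<and> last (suf l) = PosInf \<and> B l \<le> fsum xi (suf l)"
    by (metis choice)
  have suft: "suf t = [PosInf]" using schain_single[of P "suf t"] suf[of t] by simp
  have seg: "\<exists>ms. schain P (a # ms @ [b]) \<and> qd a b = eps * int (length ms + 1) \<and> (\<forall>m\<in>set ms. \<exists>v\<in>P. m = Fin v)"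
    if ab: "a \<in> Pext P" "b \<in> Pext P" "eless a b" for a b
  proof -
    obtain zs where zs: "schain P zs" "hd zs = a" "last zs = b" "qd a b = eps * int (length zs - 1)"
      using qd_opt[OF finP ab(1,2)] ab(3) by blast
    obtain ms where ms: "zs = a # ms @ [b]" "\<forall>m\<in>set ms. \<exists>v\<in>P. m = Fin v"
      using mid_extract[OF zs(1-3) ab(3)] by blast
    show ?thesis using zs ms by (intro exI[of _ ms]) simp
  qed
  have "\<forall>l. \<exists>ms. l \<le> t \<longrightarrow> schain P (X l # ms @ [Y l]) \<and> al l = eps * int (length ms + 1) \<and> (\<forall>m\<in>set ms. \<exists>v\<in>P. m = Fin v)"
  proof
    fix l show "\<exists>ms. l \<le> t \<longrightarrow> schain P (X l # ms @ [Y l]) \<and> al l = eps * int (length ms + 1) \<and> (\<forall>m\<in>set ms. \<exists>v\<in>P. m = Fin v)"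
    proof (cases "l \<le> t")
      case True then show ?thesis using seg[OF XP[OF True] YP[OF True] XY[OF True]] unfolding al_def by blast
    qed simp
  qed
  then obtain mid where mid: "\<And>l. l \<le> t \<Longrightarrow> schain P (X l # mid l @ [Y l]) \<and> al l = eps * int (length (mid l) + 1) \<and> (\<forall>m\<in>set (mid l). \<exists>v\<in>P. m = Fin v)"
    by (metis choice)
  have "\<forall>l. \<exists>ms. l < t \<longrightarrow> schain P (X (Suc l) # ms @ [Y l]) \<and> (\<forall>m\<in>set ms. \<exists>v\<in>P. m = Fin v)"
  proof
    fix l show "\<exists>ms. l < t \<longrightarrow> schain P (X (Suc l) # ms @ [Y l]) \<and> (\<forall>m\<in>set ms. \<exists>v\<in>P. m = Fin v)"
    proof (cases "l < t")
      case True then show ?thesis using seg[OF XP YP XY1[OF True]] True by (metis Suc_leI less_imp_le)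
    qed simp
  qed
  then obtain mid' where mid': "\<And>l. l < t \<Longrightarrow> schain P (X (Suc l) # mid' l @ [Y l]) \<and> (\<forall>m\<in>set (mid' l). \<exists>v\<in>P. m = Fin v)"
    by (metis choice)
  have Cl: "d1 \<le> fsum f1 (pre l) + fsum f1 (suf l)" if l: "l \<le> t" for l
  proof -
    note pl = pre[OF l] and sl = suf[OF l] and ml = mid[OF l]
    have mc: "maximal_chain P {v. Fin v \<in> set (pre l @ mid l @ suf l)}"
      using join_chain(1)[of P "pre l" "X l" "mid l" "Y l" "suf l"] pl sl ml by blast
    have sm: "\<And>f. (\<Sum>v\<in>{v. Fin v \<in> set (pre l @ mid l @ suf l)}. f (Fin v)) = fsum f (pre l) + fsum f (mid l) + fsum f (suf l)"
      using join_chain(2)[of P "pre l" "X l" "mid l" "Y l" "suf l"] pl sl ml by blast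
    have c1: "fsum xi (pre l) + fsum xi (mid l) + fsum xi (suf l) + eps \<le> q"
      using S_chain[OF xi_in_S mc] sm xiN by simp
    have c2: "fsum f2 (pre l) + fsum f2 (mid l) + fsum f2 (suf l) + eps \<le> q - d1"
      using S_chain[OF f2 mc] sm f2N by simp
    have qa: "q = A l + al l + B l" using q_AB[OF l] .
    have lx: "eps * int (length (mid l)) \<le> fsum xi (mid l)" using fsum_lb ml xip by blast
    have l2: "eps * int (length (mid l)) \<le> fsum f2 (mid l)" using fsum_lb ml f2p by blast
    have al: "al l = eps * int (length (mid l)) + eps" using ml by (simp add: algebra_simps)
    have m0: "fsum f1 (mid l) \<le> 0" using c1 qa al pl sl l2 fs[of "mid l"] by linarith
    have "d1 \<le> fsum f1 (pre l) + fsum f1 (mid l) + fsum f1 (suf l)"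
      using c1 c2 qa al pl sl lx fs[of "pre l"] fs[of "mid l"] fs[of "suf l"] by linarith
    then show ?thesis using m0 by linarith
  qed
  have Dl: "fsum f1 (pre (Suc l)) + fsum f1 (suf l) \<le> d1" if l: "l < t" for l
  proof -
    have l': "Suc l \<le> t" "l \<le> t" using l by auto
    note pl = pre[OF l'(1)] and sl = suf[OF l'(2)] and ml = mid'[OF l]
    have mc: "maximal_chain P {v. Fin v \<in> set (pre (Suc l) @ mid' l @ suf l)}"
      using join_chain(1)[of P "pre (Suc l)" "X (Suc l)" "mid' l" "Y l" "suf l"] pl sl ml by blast
    have sm: "(\<Sum>v\<in>{v. Fin v \<in> set (pre (Suc l) @ mid' l @ suf l)}. f1 (Fin v)) = fsum f1 (pre (Suc l)) + fsum f1 (mid' l) + fsum f1 (suf l)"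
      using join_chain(2)[of P "pre (Suc l)" "X (Suc l)" "mid' l" "Y l" "suf l"] pl sl ml by blast
    have c: "fsum f1 (pre (Suc l)) + fsum f1 (mid' l) + fsum f1 (suf l) \<le> d1"
      using S_chain[OF f1 mc] sm d1_def by simp
    have "0 * int (length (mid' l)) \<le> fsum f1 (mid' l)" using fsum_lb ml f1p by blast
    then show ?thesis using c by simp
  qed
  have p0: "fsum f1 (pre 0) = 0" using pre0 by simp
  have st: "fsum f1 (suf t) = 0" using suft by simp
  have "(\<Sum>l<Suc t. d1) \<le> (\<Sum>l<Suc t. fsum f1 (pre l) + fsum f1 (suf l))"
    by (rule sum_mono) (use Cl in simp)
  also have "\<dots> = (\<Sum>l<Suc t. fsum f1 (pre l)) + (\<Sum>l<Suc t. fsum f1 (suf l))"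
    by (simp add: sum.distrib)
  also have "(\<Sum>l<Suc t. fsum f1 (pre l)) = (\<Sum>l<t. fsum f1 (pre (Suc l)))"
    unfolding sum.lessThan_Suc_shift using p0 by simp
  also have "(\<Sum>l<Suc t. fsum f1 (suf l)) = (\<Sum>l<t. fsum f1 (suf l))"
    using st by simp
  also have "(\<Sum>l<t. fsum f1 (pre (Suc l))) + (\<Sum>l<t. fsum f1 (suf l)) = (\<Sum>l<t. fsum f1 (pre (Suc l)) + fsum f1 (suf l))"
    by (simp add: sum.distrib)
  also have "\<dots> \<le> (\<Sum>l<t. d1)"
    by (rule sum_mono) (use Dl in simp)
  finally have "int (Suc t) * d1 \<le> int t * d1" by simp
  then have "d1 \<le> 0" by (simp add: algebra_simps)
  then show False using d d1_def by simp
qed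

end

theorem mainTheorem10:
  fixes P :: "'a::order set" and eps :: int and t :: nat and x y :: "nat \<Rightarrow> 'a"
  assumes "finite P"
    and "eps \<in> {1, -1}"
    and "condN' P t x y"
    and "q_reduced P eps t x y"
  shows "\<exists>\<xi>. \<xi> \<in> S P eps \<and> is_generator P eps \<xi> \<and>
           \<xi> NegInf = qseq P eps (Xs x) (Ys t y) 0 t"
proof -
  interpret setting P eps t x y using assms by unfold_locales
  show ?thesis using xi_in_S xi_gen by (intro exI[of _ xi]) (simp add: xi_def q_def)
qed

end
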